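(* Let $G$ be a graph and $uv\in E(G)$. Let $W_1=N(u)\setminus N[v]$, $W_2=N(u)\cap N(v)$, $W_3=N(v)\setminus N[u]$ and $W_4=V(G)\setminus (N[u]\cup N[v])$. Suppose there is no maximal induced matching $M$ of $G$ with $V(M)\subseteq W_1\cup W_4$ and $V(M)\cap W_1\ne\emptyset$, and there is no maximal induced matching $M$ of $G$ with $V(M)\subseteq W_3\cup W_4$ and $V(M)\cap W_3\neq\emptyset$. Then $|M_{G_{T_G(u)\to v}}|\ge |M_G|$ or $|M_{G_{T_G(v)\to u}}|\ge |M_G|$.
   Context: Graphs are finite, simple, undirected. $N(x)$, $N[x]$ are the open and closed neighborhoods. An induced matching is a matching whose endpoints induce a $1$-regular subgraph; it is maximal if not properly contained in another induced matching; $M_G$ is the set of maximal induced matchings of $G$; $V(M)$ is the set of vertices covered by $M$. For a vertex $v$, $T_G(v)=\{w\in V(G): N_G[w]=N_G[v]\}$ (the twin set of $v$). For $uv\in E(G)$, making $v$ into a twin of $u$ means deleting the edge $vx$ for every $x\in N(v)\setminus N[u]$ and adding the edge $vy$ for every $y\in N(u)\setminus N[v]$. $G_{T_G(v)\to u}$ is the graph obtained from $G$ by making each vertex of $T_G(v)$ into a twin of $u$; $G_{T_G(u)\to v}$ is defined symmetrically. *)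

theory Defs
  imports Main
begin

definition graph :: "'a set \<Rightarrow> 'a set set \<Rightarrow> bool" where
  "graph V E \<longleftrightarrow> finite V \<and> (\<forall>e\<in>E. \<exists>x y. e = {x, y} \<and> x \<noteq> y \<and> x \<in> V \<and> y \<in> V)"

definition nbhd :: "'a set set \<Rightarrow> 'a \<Rightarrow> 'a set" where
  "nbhd E x = {y. {x, y} \<in> E}"

definition cnbhd :: "'a set set \<Rightarrow> 'a \<Rightarrow> 'a set" where
  "cnbhd E x = insert x (nbhd E x)"

definition covered :: "'a set set \<Rightarrow> 'a set" where
  "covered M = \<Union>M"

definition induced_matching :: "'a set set \<Rightarrow> 'a set set \<Rightarrow> bool" where
  "induced_matching E M \<longleftrightarrow>
     M \<subseteq> E \<and> (\<forall>e\<in>M. \<forall>f\<in>M. e \<noteq> f \<longrightarrow> e \<inter> f = {}) \<and>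
     (\<forall>x\<in>covered M. card (nbhd E x \<inter> covered M) = 1)"

definition maximal_induced_matching :: "'a set set \<Rightarrow> 'a set set \<Rightarrow> bool" where
  "maximal_induced_matching E M \<longleftrightarrow>
     induced_matching E M \<and> \<not> (\<exists>M'. induced_matching E M' \<and> M \<subset> M')"

definition MIM :: "'a set set \<Rightarrow> 'a set set set" where
  "MIM E = {M. maximal_induced_matching E M}"

definition twins :: "'a set \<Rightarrow> 'a set set \<Rightarrow> 'a \<Rightarrow> 'a set" where
  "twins V E v = {w \<in> V. cnbhd E w = cnbhd E v}"

text \<open>Edge set of the graph obtained from (V,E) by making every vertex w of S into
  a twin of u: delete wx for x in N(w) - N[u], add wy for y in N(u) - N[w]
  (neighbourhoods taken in the original graph).\<close>
definition make_twins :: "'a set set \<Rightarrow> 'a set \<Rightarrow> 'a \<Rightarrow> 'a set set" where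
  "make_twins E S u =
     (E - {{w, x} | w x. w \<in> S \<and> x \<in> nbhd E w - cnbhd E u})
     \<union> {{w, y} | w y. w \<in> S \<and> y \<in> nbhd E u - cnbhd E w}"

end

theory Submission
  imports Defs
begin

lemma graph_edge:
  assumes "graph V F" "e \<in> F"
  obtains x y where "e = {x,y}" "x \<noteq> y" "x \<in> V" "y \<in> V"
proof -
  have "\<exists>x y. e = {x, y} \<and> x \<noteq> y \<and> x \<in> V \<and> y \<in> V" using assms unfolding graph_def by simp
  then obtain x y where "e = {x, y}" "x \<noteq> y" "x \<in> V" "y \<in> V" by (elim exE conjE)
  then show ?thesis by (rule that)
qed

lemma graph_finite: assumes "graph V F" shows "finite F"
proof -
  have "F \<subseteq> Pow V"
  proof
    fix e assume "e \<in> F"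
    then obtain x y where "e = {x,y}" "x \<in> V" "y \<in> V" using graph_edge[OF assms] by metis
    then show "e \<in> Pow V" by simp
  qed
  moreover have "finite V" using assms unfolding graph_def by simp
  ultimately show ?thesis by (meson finite_Pow_iff finite_subset)
qed

lemma nbhd_iff: "y \<in> nbhd F x \<longleftrightarrow> {x,y} \<in> F" unfolding nbhd_def by simp
lemma covered_iff: "x \<in> covered M \<longleftrightarrow> (\<exists>e\<in>M. x \<in> e)" unfolding covered_def by simp
lemma IM_subF: "induced_matching F M \<Longrightarrow> M \<subseteq> F" unfolding induced_matching_def by simp
lemma IM_disj: "induced_matching F M \<Longrightarrow> e \<in> M \<Longrightarrow> f \<in> M \<Longrightarrow> e \<noteq> f \<Longrightarrow> e \<inter> f = {}"
  unfolding induced_matching_def by simp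
lemma IM_card: "induced_matching F M \<Longrightarrow> x \<in> covered M \<Longrightarrow> card (nbhd F x \<inter> covered M) = 1"
  unfolding induced_matching_def by simp
lemma IM_intro:
  assumes "M \<subseteq> F" "\<And>e f. e \<in> M \<Longrightarrow> f \<in> M \<Longrightarrow> e \<noteq> f \<Longrightarrow> e \<inter> f = {}"
    "\<And>x. x \<in> covered M \<Longrightarrow> card (nbhd F x \<inter> covered M) = 1"
  shows "induced_matching F M"
  unfolding induced_matching_def using assms by simp
lemma MIM_IM: "maximal_induced_matching F M \<Longrightarrow> induced_matching F M"
  unfolding maximal_induced_matching_def by simp
lemma MIM_max: "maximal_induced_matching F M \<Longrightarrow> induced_matching F M' \<Longrightarrow> M \<subseteq> M' \<Longrightarrow> M' = M"
  unfolding maximal_induced_matching_def by auto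
lemma MIM_intro: "induced_matching F M \<Longrightarrow> (\<And>M'. induced_matching F M' \<Longrightarrow> M \<subset> M' \<Longrightarrow> False)
  \<Longrightarrow> maximal_induced_matching F M"
  unfolding maximal_induced_matching_def by auto

lemma IM_partner:
  assumes "induced_matching F M" "{a,b} \<in> M" "z \<in> covered M" "{a,z} \<in> F"
  shows "z = b"
proof -
  have a: "a \<in> covered M" using assms(2) unfolding covered_def by blast
  have bc: "b \<in> covered M" using assms(2) unfolding covered_def by blast
  have c: "card (nbhd F a \<inter> covered M) = 1" using IM_card[OF assms(1) a] .
  have "{a,b} \<in> F" using IM_subF[OF assms(1)] assms(2) by blast
  then have "b \<in> nbhd F a \<inter> covered M" using bc unfolding nbhd_def by simp
  moreover have "z \<in> nbhd F a \<inter> covered M" using assms(3,4) unfolding nbhd_def by simp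
  moreover obtain w where "nbhd F a \<inter> covered M = {w}" using c by (rule card_1_singletonE)
  ultimately show ?thesis by simp
qed


lemma IM_sub:
  assumes "graph V F" "induced_matching F M" "M' \<subseteq> M"
  shows "induced_matching F M'"
proof (rule IM_intro)
  show "M' \<subseteq> F" using IM_subF[OF assms(2)] assms(3) by simp
  show "\<And>e f. e \<in> M' \<Longrightarrow> f \<in> M' \<Longrightarrow> e \<noteq> f \<Longrightarrow> e \<inter> f = {}"
    using IM_disj[OF assms(2)] assms(3) by blast
  fix x assume x: "x \<in> covered M'"
  then obtain e where e: "e \<in> M'" "x \<in> e" unfolding covered_def by blast
  then have eF: "e \<in> F" using IM_subF[OF assms(2)] assms(3) by blast
  then obtain a b where ab: "e = {a,b}" "a \<noteq> b" using assms(1) graph_edge by metis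
  define y where "y = (if x = a then b else a)"
  have y: "e = {x,y}" using ab e unfolding y_def by auto
  have ye: "y \<in> e" unfolding y by simp
  have "y \<in> covered M'" using e(1) ye unfolding covered_def by (rule UnionI)
  moreover have "{x,y} \<in> F" using y eF by simp
  then have "y \<in> nbhd F x" unfolding nbhd_def by simp
  ultimately have "y \<in> nbhd F x \<inter> covered M'" by blast
  hence ne: "nbhd F x \<inter> covered M' \<noteq> {}" by blast
  have xM: "x \<in> covered M" using x assms(3) unfolding covered_def by blast
  have c: "card (nbhd F x \<inter> covered M) = 1" using IM_card[OF assms(2) xM] .
  have sub: "nbhd F x \<inter> covered M' \<subseteq> nbhd F x \<inter> covered M" using assms(3) unfolding covered_def by blast
  have fin: "finite (nbhd F x \<inter> covered M)" by (rule card_ge_0_finite) (simp add: c)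
  have "card (nbhd F x \<inter> covered M') \<le> 1" using card_mono[OF fin sub] c by simp
  moreover have "card (nbhd F x \<inter> covered M') \<noteq> 0"
  proof -
    have "finite (nbhd F x \<inter> covered M')" using finite_subset[OF sub fin] .
    then show ?thesis using ne by simp
  qed
  ultimately show "card (nbhd F x \<inter> covered M') = 1" by simp
qed

lemma IM_transfer:
  assumes "graph V F1" "\<And>a b. a \<in> W \<Longrightarrow> b \<in> W \<Longrightarrow> {a,b} \<in> F1 \<longleftrightarrow> {a,b} \<in> F2"
    "covered M \<subseteq> W" "induced_matching F1 M"
  shows "induced_matching F2 M"
proof (rule IM_intro)
  show "M \<subseteq> F2"
  proof
    fix e assume e: "e \<in> M"
    then have eF: "e \<in> F1" using IM_subF[OF assms(4)] by blast
    then obtain a b where ab: "e = {a,b}" using assms(1) graph_edge by metis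
    have "a \<in> e" "b \<in> e" using ab by simp_all
    then have "a \<in> covered M" "b \<in> covered M" using e unfolding covered_def by blast+
    then have "a \<in> W" "b \<in> W" using assms(3) by blast+
    then have "{a,b} \<in> F1 \<longleftrightarrow> {a,b} \<in> F2" by (rule assms(2))
    then show "e \<in> F2" using eF ab by simp
  qed
  show "\<And>e f. e \<in> M \<Longrightarrow> f \<in> M \<Longrightarrow> e \<noteq> f \<Longrightarrow> e \<inter> f = {}"
    using IM_disj[OF assms(4)] by blast
  fix x assume x: "x \<in> covered M"
  have "nbhd F2 x \<inter> covered M = nbhd F1 x \<inter> covered M"
  proof -
    have "y \<in> nbhd F2 x \<longleftrightarrow> y \<in> nbhd F1 x" if y: "y \<in> covered M" for y
    proof -
      have "x \<in> W" "y \<in> W" using x y assms(3) by blast+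
      then have "{x,y} \<in> F1 \<longleftrightarrow> {x,y} \<in> F2" by (rule assms(2))
      then show ?thesis unfolding nbhd_iff by simp
    qed
    then show ?thesis by blast
  qed
  then show "card (nbhd F2 x \<inter> covered M) = 1" using IM_card[OF assms(4) x] by simp
qed

lemma MIM_transfer1:
  assumes g1: "graph V G1" and g2: "graph V G2"
    and ag: "\<And>a b. a \<in> W \<Longrightarrow> b \<in> W \<Longrightarrow> {a,b} \<in> G1 \<longleftrightarrow> {a,b} \<in> G2"
    and cv: "\<And>M'. M \<subseteq> M' \<Longrightarrow> induced_matching G1 M' \<or> induced_matching G2 M' \<Longrightarrow> covered M' \<subseteq> W"
    and m: "maximal_induced_matching G1 M"
  shows "maximal_induced_matching G2 M"
proof (rule MIM_intro)
  have im: "induced_matching G1 M" using MIM_IM[OF m] .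
  show "induced_matching G2 M"
    using IM_transfer[OF g1 ag cv[OF order_refl] im] im by blast
  fix M' assume M': "induced_matching G2 M'" "M \<subset> M'"
  have "covered M' \<subseteq> W" using cv M' by blast
  moreover have "\<And>a b. a \<in> W \<Longrightarrow> b \<in> W \<Longrightarrow> {a,b} \<in> G2 \<longleftrightarrow> {a,b} \<in> G1" using ag by simp
  ultimately have "induced_matching G1 M'"
    using IM_transfer[OF g2 _ _ M'(1), of W G1] by blast
  then show False using MIM_max[OF m] M'(2) by blast
qed

lemma MIM_transfer:
  assumes "graph V F1" "graph V F2"
    "\<And>a b. a \<in> W \<Longrightarrow> b \<in> W \<Longrightarrow> {a,b} \<in> F1 \<longleftrightarrow> {a,b} \<in> F2"
    "\<And>M'. M \<subseteq> M' \<Longrightarrow> induced_matching F1 M' \<or> induced_matching F2 M' \<Longrightarrow> covered M' \<subseteq> W"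
  shows "maximal_induced_matching F1 M \<longleftrightarrow> maximal_induced_matching F2 M"
proof
  assume "maximal_induced_matching F1 M" then show "maximal_induced_matching F2 M"
    using MIM_transfer1[OF assms(1,2), of W M] assms(3,4) by blast
next
  have ag: "\<And>a b. a \<in> W \<Longrightarrow> b \<in> W \<Longrightarrow> {a,b} \<in> F2 \<longleftrightarrow> {a,b} \<in> F1" using assms(3) by simp
  have cv: "\<And>M'. M \<subseteq> M' \<Longrightarrow> induced_matching F2 M' \<or> induced_matching F1 M' \<Longrightarrow> covered M' \<subseteq> W"
    using assms(4) by blast
  assume "maximal_induced_matching F2 M" then show "maximal_induced_matching F1 M"
    using MIM_transfer1[OF assms(2,1) ag cv] by blast
qed

lemma MIM_extend:
  assumes "graph V F" "induced_matching F M"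
  shows "\<exists>M'. M \<subseteq> M' \<and> maximal_induced_matching F M'"
proof -
  let ?S = "{M'. M \<subseteq> M' \<and> induced_matching F M'}"
  have "?S \<subseteq> Pow F" using IM_subF by blast
  hence fin: "finite ?S" using graph_finite[OF assms(1)] by (meson finite_Pow_iff finite_subset)
  have "M \<in> ?S" using assms by blast
  then obtain m where m: "m \<in> ?S" "\<forall>b\<in>?S. m \<le> b \<longrightarrow> m = b"
    using finite_has_maximal[OF fin] by blast
  have "maximal_induced_matching F m"
  proof (rule MIM_intro)
    show "induced_matching F m" using m by blast
    fix M' assume "induced_matching F M'" "m \<subset> M'"
    then show False using m by auto
  qed
  then show ?thesis using m by blast
qed

lemma MIM_unique_aux:
  assumes "graph V F1" "graph V F2" "maximal_induced_matching F1 M1"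
    "M1 \<union> M2 \<subseteq> Ms" "induced_matching F2 Ms"
    "\<And>a b. a \<in> covered M1 \<union> covered M2 \<Longrightarrow> b \<in> covered M1 \<union> covered M2 \<Longrightarrow> {a,b} \<in> F1 \<longleftrightarrow> {a,b} \<in> F2"
  shows "M2 \<subseteq> M1"
proof
  fix f assume f: "f \<in> M2"
  show "f \<in> M1"
  proof (rule ccontr)
    assume nf: "f \<notin> M1"
    have "induced_matching F2 (insert f M1)" using IM_sub[OF assms(2,5)] assms(4) f by blast
    moreover have "covered (insert f M1) \<subseteq> covered M1 \<union> covered M2" using f unfolding covered_def by blast
    moreover have "\<And>a b. a \<in> covered M1 \<union> covered M2 \<Longrightarrow> b \<in> covered M1 \<union> covered M2 \<Longrightarrow> {a,b} \<in> F2 \<longleftrightarrow> {a,b} \<in> F1"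
      using assms(6) by simp
    ultimately have "induced_matching F1 (insert f M1)"
      using IM_transfer[OF assms(2), of "covered M1 \<union> covered M2" F1] by blast
    then show False using MIM_max[OF assms(3)] nf by blast
  qed
qed

lemma MIM_unique:
  assumes "graph V F1" "graph V F2" "maximal_induced_matching F1 M1" "maximal_induced_matching F1 M2"
    "M1 \<union> M2 \<subseteq> Ms" "induced_matching F2 Ms"
    "\<And>a b. a \<in> covered M1 \<union> covered M2 \<Longrightarrow> b \<in> covered M1 \<union> covered M2 \<Longrightarrow> {a,b} \<in> F1 \<longleftrightarrow> {a,b} \<in> F2"
  shows "M1 = M2"
proof
  show "M2 \<subseteq> M1" using MIM_unique_aux[OF assms(1,2,3,5,6,7)] .
  have "M2 \<union> M1 \<subseteq> Ms" using assms(5) by blast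
  moreover have "\<And>a b. a \<in> covered M2 \<union> covered M1 \<Longrightarrow> b \<in> covered M2 \<union> covered M1 \<Longrightarrow> {a,b} \<in> F1 \<longleftrightarrow> {a,b} \<in> F2"
    using assms(7) by blast
  ultimately show "M1 \<subseteq> M2" using MIM_unique_aux[OF assms(1,2,4) _ assms(6)] by blast
qed


definition cnt :: "'a set set \<Rightarrow> 'a set \<Rightarrow> nat" where
  "cnt F e = card {M. maximal_induced_matching F M \<and> e \<in> M}"

definition sw :: "'a \<Rightarrow> 'a \<Rightarrow> 'a \<Rightarrow> 'a" where
  "sw a b x = (if x = a then b else if x = b then a else x)"

lemma sw_sw[simp]: "sw a b (sw a b x) = x" unfolding sw_def by auto
lemma sw_a[simp]: "sw a b a = b" unfolding sw_def by auto
lemma sw_b[simp]: "sw a b b = a" unfolding sw_def by auto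
lemma sw_other: "x \<noteq> a \<Longrightarrow> x \<noteq> b \<Longrightarrow> sw a b x = x" unfolding sw_def by auto

lemma inv_inj: assumes "\<And>x. \<sigma> (\<sigma> x) = x" shows "inj \<sigma>"
  by (metis assms injI)

lemma inv_img_img: assumes "\<And>x. \<sigma> (\<sigma> x) = x" shows "\<sigma> ` \<sigma> ` A = A"
  using assms by (simp add: image_image)

lemma aut_edge:
  assumes inv: "\<And>x. \<sigma> (\<sigma> x) = x" and inF: "\<And>e. e \<in> F \<Longrightarrow> \<sigma> ` e \<in> F"
  shows "\<sigma> ` e \<in> F \<longleftrightarrow> e \<in> F"
proof
  assume "\<sigma> ` e \<in> F" then have "\<sigma> ` \<sigma> ` e \<in> F" by (rule inF)
  then show "e \<in> F" using inv_img_img[OF inv] by simp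
qed (rule inF)

lemma aut_nbhd:
  assumes inv: "\<And>x. \<sigma> (\<sigma> x) = x" and inF: "\<And>e. e \<in> F \<Longrightarrow> \<sigma> ` e \<in> F"
  shows "nbhd F (\<sigma> x) = \<sigma> ` nbhd F x"
proof (rule set_eqI)
  fix y
  have "y \<in> nbhd F (\<sigma> x) \<longleftrightarrow> {\<sigma> x, y} \<in> F" by (rule nbhd_iff)
  also have "\<dots> \<longleftrightarrow> \<sigma> ` {\<sigma> x, y} \<in> F" by (rule aut_edge[OF inv inF, symmetric])
  also have "\<sigma> ` {\<sigma> x, y} = {x, \<sigma> y}" using inv by simp
  also have "{x, \<sigma> y} \<in> F \<longleftrightarrow> \<sigma> y \<in> nbhd F x" by (simp add: nbhd_iff)
  also have "\<dots> \<longleftrightarrow> y \<in> \<sigma> ` nbhd F x"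
  proof
    assume "\<sigma> y \<in> nbhd F x" then have "\<sigma> (\<sigma> y) \<in> \<sigma> ` nbhd F x" by (rule imageI)
    then show "y \<in> \<sigma> ` nbhd F x" using inv by simp
  next
    assume "y \<in> \<sigma> ` nbhd F x" then obtain z where "z \<in> nbhd F x" "y = \<sigma> z" by blast
    then show "\<sigma> y \<in> nbhd F x" using inv by simp
  qed
  finally show "y \<in> nbhd F (\<sigma> x) \<longleftrightarrow> y \<in> \<sigma> ` nbhd F x" .
qed

lemma aut_covered: "covered ((`) \<sigma> ` M) = \<sigma> ` covered M"
  unfolding covered_def by auto

lemma aut_IM:
  assumes inv: "\<And>x. \<sigma> (\<sigma> x) = x" and inF: "\<And>e. e \<in> F \<Longrightarrow> \<sigma> ` e \<in> F"
    and im: "induced_matching F M"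
  shows "induced_matching F ((`) \<sigma> ` M)"
proof (rule IM_intro)
  have inj: "inj \<sigma>" by (rule inv_inj[OF inv])
  show "(`) \<sigma> ` M \<subseteq> F" using IM_subF[OF im] inF by blast
  show "e \<inter> f = {}" if ee: "e \<in> (`) \<sigma> ` M" and ff: "f \<in> (`) \<sigma> ` M" and ne: "e \<noteq> f" for e f
  proof -
    obtain e0 where "e0 \<in> M" "e = \<sigma> ` e0" using ee by blast
    moreover obtain f0 where "f0 \<in> M" "f = \<sigma> ` f0" using ff by blast
    moreover have "e0 \<noteq> f0" using ne calculation by blast
    ultimately have "e0 \<inter> f0 = {}" "e = \<sigma> ` e0" "f = \<sigma> ` f0" using IM_disj[OF im] by blast+
    then show ?thesis using inj by (simp add: image_Int[symmetric])
  qed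
  fix w assume w: "w \<in> covered ((`) \<sigma> ` M)"
  then obtain x where x: "x \<in> covered M" "w = \<sigma> x" unfolding aut_covered by blast
  have "nbhd F w \<inter> covered ((`) \<sigma> ` M) = \<sigma> ` (nbhd F x \<inter> covered M)"
    using aut_nbhd[OF inv inF, of x] inj by (simp add: x(2) aut_covered image_Int)
  then show "card (nbhd F w \<inter> covered ((`) \<sigma> ` M)) = 1"
    using IM_card[OF im x(1)] inj by (simp add: card_image inj_on_subset)
qed

lemma aut_MIM:
  assumes inv: "\<And>x. \<sigma> (\<sigma> x) = x" and inF: "\<And>e. e \<in> F \<Longrightarrow> \<sigma> ` e \<in> F"
    and m: "maximal_induced_matching F M"
  shows "maximal_induced_matching F ((`) \<sigma> ` M)"
proof (rule MIM_intro)
  show "induced_matching F ((`) \<sigma> ` M)" using aut_IM[OF inv inF MIM_IM[OF m]] .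
  fix M' assume M': "induced_matching F M'" "(`) \<sigma> ` M \<subset> M'"
  have ii: "\<And>A. (`) \<sigma> ` (`) \<sigma> ` A = A" using inv by (simp add: image_image)
  have "inj ((`) \<sigma> :: 'a set \<Rightarrow> 'a set)" by (metis ii image_image injI inv_img_img[OF inv])
  then have "(`) \<sigma> ` (`) \<sigma> ` M \<subset> (`) \<sigma> ` M'" using M'(2) by (meson image_strict_mono inj_on_subset subset_UNIV)
  then have "M \<subset> (`) \<sigma> ` M'" using ii by simp
  moreover have "induced_matching F ((`) \<sigma> ` M')" using aut_IM[OF inv inF M'(1)] .
  ultimately show False using MIM_max[OF m] by blast
qed

lemma aut_cnt:
  assumes inv: "\<And>x. \<sigma> (\<sigma> x) = x" and inF: "\<And>e. e \<in> F \<Longrightarrow> \<sigma> ` e \<in> F"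
  shows "cnt F (\<sigma> ` e) = cnt F e"
proof -
  let ?A = "{M. maximal_induced_matching F M \<and> e \<in> M}"
  let ?B = "{M. maximal_induced_matching F M \<and> \<sigma> ` e \<in> M}"
  let ?f = "\<lambda>M. (`) \<sigma> ` M"
  have ii: "\<And>A. ?f (?f A) = A" using inv by (simp add: image_image)
  have "bij_betw ?f ?A ?B"
  proof (rule bij_betw_byWitness[where f' = ?f])
    show "?f ` ?A \<subseteq> ?B" using aut_MIM[OF inv inF] by blast
    show "?f ` ?B \<subseteq> ?A"
    proof
      fix M' assume "M' \<in> ?f ` ?B"
      then obtain M where M: "M \<in> ?B" "M' = ?f M" by blast
      from M(1) have "maximal_induced_matching F (?f M)" "\<sigma> ` \<sigma> ` e \<in> ?f M"
        using aut_MIM[OF inv inF] by blast+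
      then show "M' \<in> ?A" using inv_img_img[OF inv] M(2) by simp
    qed
    show "\<forall>x \<in> ?A. ?f (?f x) = x" using ii by blast
    show "\<forall>y \<in> ?B. ?f (?f y) = y" using ii by blast
  qed
  then show ?thesis unfolding cnt_def by (simp add: bij_betw_same_card)
qed


lemma graph_edge_at:
  assumes "graph V F" "e \<in> F" "a \<in> e"
  obtains b where "e = {a,b}" "a \<noteq> b" "b \<in> V"
proof -
  obtain x y where xy: "e = {x,y}" "x \<noteq> y" "x \<in> V" "y \<in> V" using graph_edge[OF assms(1,2)] by metis
  show ?thesis
  proof (cases "a = x")
    case True then show ?thesis using that xy by simp
  next
    case False then have "a = y" using xy assms(3) by simp
    then show ?thesis using that[of x] xy by (simp add: insert_commute)
  qed
qed

lemma graph_V: "graph V F \<Longrightarrow> finite V" unfolding graph_def by simp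

lemma MIM_fin: assumes "graph V F" shows "finite (MIM F)"
proof -
  have "MIM F \<subseteq> Pow F" unfolding MIM_def using IM_subF MIM_IM by blast
  then show ?thesis using graph_finite[OF assms] by (meson finite_Pow_iff finite_subset)
qed

lemma cnt_nonedge: "e \<notin> F \<Longrightarrow> cnt F e = 0"
proof -
  assume e: "e \<notin> F"
  have "{M. maximal_induced_matching F M \<and> e \<in> M} = {}" using e IM_subF MIM_IM by blast
  then show ?thesis unfolding cnt_def by (metis card.empty)
qed

definition pairs2 :: "'a set \<Rightarrow> 'a set set" where "pairs2 K = {e. e \<subseteq> K \<and> card e = 2}"

lemma decomp:
  assumes g: "graph V F" and KV: "K \<subseteq> V"
    and cl: "\<And>a b. a \<in> K \<Longrightarrow> b \<in> K \<Longrightarrow> a \<noteq> b \<Longrightarrow> {a,b} \<in> F"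
  shows "card (MIM F) = card {M \<in> MIM F. covered M \<inter> K = {}}
     + (\<Sum>p\<in>K \<times> (V - K). cnt F {fst p, snd p}) + (\<Sum>e\<in>pairs2 K. cnt F e)"
proof -
  define T0 where "T0 = {M \<in> MIM F. covered M \<inter> K = {}}"
  define EK where "EK = {e \<in> F. e \<inter> K \<noteq> {}}"
  define C where "C = (\<lambda>e. {M. maximal_induced_matching F M \<and> e \<in> M})"
  have finV: "finite V" using graph_V[OF g] .
  have finK: "finite K" using finite_subset[OF KV finV] .
  have finF: "finite F" using graph_finite[OF g] .
  have finM: "finite (MIM F)" using MIM_fin[OF g] .
  have split: "MIM F = T0 \<union> \<Union>(C ` EK)"
  proof (rule set_eqI)
    fix M
    show "M \<in> MIM F \<longleftrightarrow> M \<in> T0 \<union> \<Union>(C ` EK)"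
    proof
      assume M: "M \<in> MIM F"
      show "M \<in> T0 \<union> \<Union>(C ` EK)"
      proof (cases "covered M \<inter> K = {}")
        case True then show ?thesis using M unfolding T0_def by blast
      next
        case False
        then obtain a e where "a \<in> K" "e \<in> M" "a \<in> e" unfolding covered_def by blast
        moreover have "e \<in> F" using IM_subF[OF MIM_IM] M \<open>e \<in> M\<close> unfolding MIM_def by blast
        ultimately have "e \<in> EK" "M \<in> C e" using M unfolding EK_def C_def MIM_def by blast+
        then show ?thesis by blast
      qed
    next
      assume "M \<in> T0 \<union> \<Union>(C ` EK)"
      then show "M \<in> MIM F" unfolding T0_def C_def MIM_def by blast
    qed
  qed
  have disj1: "T0 \<inter> \<Union>(C ` EK) = {}"
  proof -
    have "M \<notin> T0" if h1: "e \<in> EK" and h2: "M \<in> C e" for M e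
    proof -
      obtain a where "a \<in> e" "a \<in> K" using h1 unfolding EK_def by blast
      then have "a \<in> covered M" "a \<in> K" using h2 unfolding C_def covered_def by blast+
      then show ?thesis unfolding T0_def by blast
    qed
    then show ?thesis by blast
  qed
  have disj2: "C e1 \<inter> C e2 = {}" if e1: "e1 \<in> EK" and e2: "e2 \<in> EK" and ne: "e1 \<noteq> e2" for e1 e2
  proof (rule ccontr)
    assume "C e1 \<inter> C e2 \<noteq> {}"
    then obtain M where M: "maximal_induced_matching F M" "e1 \<in> M" "e2 \<in> M" unfolding C_def by blast
    have im: "induced_matching F M" using MIM_IM[OF M(1)] .
    obtain a1 where a1: "a1 \<in> e1" "a1 \<in> K" "e1 \<in> F" using e1 unfolding EK_def by blast
    obtain a2 where a2: "a2 \<in> e2" "a2 \<in> K" using e2 unfolding EK_def by blast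
    obtain b1 where b1: "e1 = {a1,b1}" "a1 \<noteq> b1" using graph_edge_at[OF g a1(3) a1(1)] by metis
    have dj: "e1 \<inter> e2 = {}" using IM_disj[OF im M(2,3) ne] .
    then have "a1 \<noteq> a2" using a1 a2 by blast
    then have "{a1,a2} \<in> F" using cl a1 a2 by blast
    moreover have "a2 \<in> covered M" using M(3) a2 unfolding covered_def by blast
    moreover have "{a1,b1} \<in> M" using M(2) b1 by simp
    ultimately have "a2 = b1" using IM_partner[OF im] by blast
    then show False using dj a2 b1 by blast
  qed
  have finC: "finite (C e)" for e
    using finM unfolding C_def MIM_def by (rule finite_subset[rotated]) blast
  have finEK: "finite EK" using finF unfolding EK_def by simp
  have "card (MIM F) = card T0 + card (\<Union>(C ` EK))"
    unfolding split
    by (rule card_Un_disjoint) (use finM split disj1 in auto)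
  also have "card (\<Union>(C ` EK)) = (\<Sum>e\<in>EK. card (C e))"
    by (rule card_UN_disjoint) (use finEK finC disj2 in auto)
  also have "\<dots> = (\<Sum>e\<in>EK. cnt F e)" unfolding C_def cnt_def by simp
  also have "\<dots> = (\<Sum>e\<in>(\<lambda>p. {fst p, snd p}) ` (K \<times> (V - K)) \<union> pairs2 K. cnt F e)"
  proof (rule sum.mono_neutral_left)
    have "pairs2 K \<subseteq> Pow K" unfolding pairs2_def by blast
    then have "finite (pairs2 K)" using finK by (meson finite_Pow_iff finite_subset)
    moreover have "finite (K \<times> (V - K))" using finK finV by simp
    ultimately show "finite ((\<lambda>p. {fst p, snd p}) ` (K \<times> (V - K)) \<union> pairs2 K)" by simp
    show "EK \<subseteq> (\<lambda>p. {fst p, snd p}) ` (K \<times> (V - K)) \<union> pairs2 K"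
    proof
      fix e assume e: "e \<in> EK"
      then obtain a where a: "a \<in> e" "a \<in> K" "e \<in> F" unfolding EK_def by blast
      obtain b where b: "e = {a,b}" "a \<noteq> b" "b \<in> V" using graph_edge_at[OF g a(3) a(1)] by metis
      show "e \<in> (\<lambda>p. {fst p, snd p}) ` (K \<times> (V - K)) \<union> pairs2 K"
      proof (cases "b \<in> K")
        case True
        then have "e \<in> pairs2 K" unfolding pairs2_def using a b by simp
        then show ?thesis by blast
      next
        case False
        then have "(a,b) \<in> K \<times> (V - K)" using a b by simp
        moreover have "e = {fst (a,b), snd (a,b)}" using b by simp
        ultimately show ?thesis by blast
      qed
    qed
    show "\<forall>e\<in>(\<lambda>p. {fst p, snd p}) ` (K \<times> (V - K)) \<union> pairs2 K - EK. cnt F e = 0"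
    proof
      fix e assume e: "e \<in> (\<lambda>p. {fst p, snd p}) ` (K \<times> (V - K)) \<union> pairs2 K - EK"
      have "e \<inter> K \<noteq> {}"
      proof -
        have "e \<in> (\<lambda>p. {fst p, snd p}) ` (K \<times> (V - K)) \<or> e \<in> pairs2 K" using e by blast
        then show ?thesis
        proof
          assume "e \<in> (\<lambda>p. {fst p, snd p}) ` (K \<times> (V - K))"
          then obtain p where "p \<in> K \<times> (V - K)" "e = {fst p, snd p}" by blast
          then show ?thesis by auto
        next
          assume "e \<in> pairs2 K"
          then have "e \<subseteq> K" "card e = 2" unfolding pairs2_def by simp_all
          moreover have "e \<noteq> {}" using \<open>card e = 2\<close> by auto
          ultimately show ?thesis by blast
        qed
      qed
      then have "e \<notin> F" using e unfolding EK_def by blast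
      then show "cnt F e = 0" by (rule cnt_nonedge)
    qed
  qed
  also have "\<dots> = (\<Sum>e\<in>(\<lambda>p. {fst p, snd p}) ` (K \<times> (V - K)). cnt F e) + (\<Sum>e\<in>pairs2 K. cnt F e)"
  proof (rule sum.union_disjoint)
    show "finite ((\<lambda>p. {fst p, snd p}) ` (K \<times> (V - K)))" using finK finV by simp
    have "pairs2 K \<subseteq> Pow K" unfolding pairs2_def by blast
    then show "finite (pairs2 K)" using finK by (meson finite_Pow_iff finite_subset)
    show "(\<lambda>p. {fst p, snd p}) ` (K \<times> (V - K)) \<inter> pairs2 K = {}"
      unfolding pairs2_def by auto
  qed
  also have "(\<Sum>e\<in>(\<lambda>p. {fst p, snd p}) ` (K \<times> (V - K)). cnt F e) = (\<Sum>p\<in>K \<times> (V - K). cnt F {fst p, snd p})"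
  proof (subst sum.reindex)
    show "inj_on (\<lambda>p. {fst p, snd p}) (K \<times> (V - K))"
    proof (rule inj_onI)
      fix p q assume p: "p \<in> K \<times> (V - K)" and q: "q \<in> K \<times> (V - K)" and eq: "{fst p, snd p} = {fst q, snd q}"
      then show "p = q" by (auto simp: doubleton_eq_iff prod_eq_iff)
    qed
  qed simp
  finally show ?thesis unfolding T0_def by simp
qed


lemma edge_sub: "graph V F \<Longrightarrow> {a,b} \<in> F \<Longrightarrow> a \<in> V \<and> b \<in> V \<and> a \<noteq> b"
proof -
  assume g: "graph V F" and e: "{a,b} \<in> F"
  obtain x y where xy: "{a,b} = {x,y}" "x \<noteq> y" "x \<in> V" "y \<in> V" using graph_edge[OF g e] by metis
  then show ?thesis by (auto simp: doubleton_eq_iff)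
qed

lemma cnbhd_iff: "y \<in> cnbhd F x \<longleftrightarrow> y = x \<or> {x,y} \<in> F" unfolding cnbhd_def nbhd_def by auto

lemma twins_iff: "a \<in> twins V F w \<longleftrightarrow> a \<in> V \<and> cnbhd F a = cnbhd F w" unfolding twins_def by simp

lemma covered_sub: "graph V F \<Longrightarrow> induced_matching F M \<Longrightarrow> covered M \<subseteq> V"
proof
  fix x assume g: "graph V F" and im: "induced_matching F M" and x: "x \<in> covered M"
  then obtain e where e: "e \<in> M" "x \<in> e" unfolding covered_def by blast
  then have "e \<in> F" using IM_subF[OF im] by blast
  then obtain a b where "e = {a,b}" "a \<in> V" "b \<in> V" using graph_edge[OF g] by metis
  then show "x \<in> V" using e by blast
qed

locale side =
  fixes V :: "'a set" and E :: "'a set set" and u v :: 'a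
  assumes gr: "graph V E" and uv: "{u,v} \<in> E" and nt: "cnbhd E u \<noteq> cnbhd E v"
    and hyp: "\<not> (\<exists>M. maximal_induced_matching E M \<and>
            covered M \<subseteq> (nbhd E v - cnbhd E u) \<union> (V - (cnbhd E u \<union> cnbhd E v)) \<and>
            covered M \<inter> (nbhd E v - cnbhd E u) \<noteq> {})"
begin

abbreviation "X \<equiv> twins V E u"
abbreviation "Y \<equiv> twins V E v"
abbreviation "K \<equiv> X \<union> Y"
abbreviation "F \<equiv> make_twins E Y u"

lemma uV: "u \<in> V" and vV: "v \<in> V" and unv: "u \<noteq> v" using edge_sub[OF gr uv] by auto

lemma uX: "u \<in> X" using uV twins_iff by metis
lemma vY: "v \<in> Y" using vV twins_iff by metis
lemma XV: "X \<subseteq> V" unfolding twins_def by blast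
lemma YV: "Y \<subseteq> V" unfolding twins_def by blast
lemma KV: "K \<subseteq> V" using XV YV by blast
lemma XY: "X \<inter> Y = {}" using nt unfolding twins_def by auto
lemma cX: "a \<in> X \<Longrightarrow> cnbhd E a = cnbhd E u" unfolding twins_def by simp
lemma cY: "a \<in> Y \<Longrightarrow> cnbhd E a = cnbhd E v" unfolding twins_def by simp

lemma vu_in: "v \<in> cnbhd E u" "u \<in> cnbhd E v"
  using uv by (auto simp: cnbhd_iff insert_commute)

lemma clique: assumes "a \<in> K" "b \<in> K" "a \<noteq> b" shows "{a,b} \<in> E"
proof -
  have XX: "{a,b} \<in> E" if "a \<in> twins V E w" "b \<in> twins V E w" "a \<noteq> b" for a b w
  proof -
    have "b \<in> cnbhd E b" by (simp add: cnbhd_iff)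
    then have "b \<in> cnbhd E a" using that twins_iff by metis
    then show ?thesis using that(3) cnbhd_iff by metis
  qed
  have XY': "{a,b} \<in> E" if a: "a \<in> X" and b: "b \<in> Y" for a b
  proof -
    have "a \<noteq> v" using a vY XY by blast
    moreover have "v \<in> cnbhd E a" using cX[OF a] vu_in by simp
    ultimately have "{a,v} \<in> E" using cnbhd_iff by metis
    then have "a \<in> cnbhd E b" using cY[OF b] cnbhd_iff by (metis insert_commute)
    moreover have "a \<noteq> b" using a b XY by blast
    ultimately show ?thesis using cnbhd_iff by (metis insert_commute)
  qed
  show ?thesis
  proof (cases "a \<in> X")
    case True
    then show ?thesis
    proof (cases "b \<in> X")
      case True then show ?thesis using XX \<open>a \<in> X\<close> assms(3) by blast
    next
      case False then have "b \<in> Y" using assms by blast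
      then show ?thesis using XY' \<open>a \<in> X\<close> by blast
    qed
  next
    case False then have aY: "a \<in> Y" using assms by blast
    show ?thesis
    proof (cases "b \<in> X")
      case True then show ?thesis using XY'[OF True aY] by (simp add: insert_commute)
    next
      case False then have "b \<in> Y" using assms by blast
      then show ?thesis using XX aY assms(3) by blast
    qed
  qed
qed

lemma K_cu: "K \<subseteq> cnbhd E u"
proof
  fix a assume a: "a \<in> K"
  show "a \<in> cnbhd E u"
  proof (cases "a = u")
    case True then show ?thesis by (simp add: cnbhd_iff)
  next
    case False then have "{u,a} \<in> E" using clique uX a by blast
    then show ?thesis by (simp add: cnbhd_iff)
  qed
qed

lemma K_cv: "K \<subseteq> cnbhd E v"
proof
  fix a assume a: "a \<in> K"
  show "a \<in> cnbhd E v"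
  proof (cases "a = v")
    case True then show ?thesis by (simp add: cnbhd_iff)
  next
    case False then have "{v,a} \<in> E" using clique vY a by blast
    then show ?thesis by (simp add: cnbhd_iff)
  qed
qed

lemma F_def': "F = (E - {{w, x} | w x. w \<in> Y \<and> x \<in> nbhd E w - cnbhd E u})
     \<union> {{w, y} | w y. w \<in> Y \<and> y \<in> nbhd E u - cnbhd E w}"
  unfolding make_twins_def by simp

lemma dbl_mem: "{a,b} = {w,x} \<Longrightarrow> w = a \<or> w = b" by (auto simp: doubleton_eq_iff)

lemma F_off: assumes "a \<notin> Y" "b \<notin> Y" shows "{a,b} \<in> F \<longleftrightarrow> {a,b} \<in> E"
proof -
  have r: "{a,b} \<notin> {{w, x} | w x. w \<in> Y \<and> x \<in> nbhd E w - cnbhd E u}"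
  proof
    assume "{a,b} \<in> {{w, x} | w x. w \<in> Y \<and> x \<in> nbhd E w - cnbhd E u}"
    then obtain w x where h: "{a,b} = {w,x}" "w \<in> Y" unfolding mem_Collect_eq by (elim exE conjE)
    from h(1) have "w = a \<or> w = b" by (rule dbl_mem)
    then show False using h(2) assms by (elim disjE) simp_all
  qed
  have s: "{a,b} \<notin> {{w, y} | w y. w \<in> Y \<and> y \<in> nbhd E u - cnbhd E w}"
  proof
    assume "{a,b} \<in> {{w, y} | w y. w \<in> Y \<and> y \<in> nbhd E u - cnbhd E w}"
    then obtain w x where h: "{a,b} = {w,x}" "w \<in> Y" unfolding mem_Collect_eq by (elim exE conjE)
    from h(1) have "w = a \<or> w = b" by (rule dbl_mem)
    then show False using h(2) assms by (elim disjE) simp_all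
  qed
  show ?thesis unfolding F_def' using r s by (simp only: Un_iff Diff_iff) blast
qed

lemma F_Y: assumes w: "w \<in> Y" and zw: "z \<noteq> w" shows "{w,z} \<in> F \<longleftrightarrow> z \<in> cnbhd E u"
proof -
  have wu: "w \<in> cnbhd E u" using w K_cu by blast
  have r: "{w,z} \<in> {{w, x} | w x. w \<in> Y \<and> x \<in> nbhd E w - cnbhd E u} \<longleftrightarrow> z \<in> nbhd E w - cnbhd E u"
  proof
    assume "{w,z} \<in> {{w, x} | w x. w \<in> Y \<and> x \<in> nbhd E w - cnbhd E u}"
    then obtain w' x where h: "{w,z} = {w',x}" "w' \<in> Y" "x \<in> nbhd E w' - cnbhd E u" by blast
    then have "(w = w' \<and> z = x) \<or> (w = x \<and> z = w')" by (simp add: doubleton_eq_iff)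
    then show "z \<in> nbhd E w - cnbhd E u" using h wu by blast
  next
    assume "z \<in> nbhd E w - cnbhd E u" then show "{w,z} \<in> {{w, x} | w x. w \<in> Y \<and> x \<in> nbhd E w - cnbhd E u}"
      using w by blast
  qed
  have s: "{w,z} \<in> {{w, y} | w y. w \<in> Y \<and> y \<in> nbhd E u - cnbhd E w} \<longleftrightarrow> z \<in> nbhd E u - cnbhd E w"
  proof
    assume "{w,z} \<in> {{w, y} | w y. w \<in> Y \<and> y \<in> nbhd E u - cnbhd E w}"
    then obtain w' y where h: "{w,z} = {w',y}" "w' \<in> Y" "y \<in> nbhd E u - cnbhd E w'" by blast
    then have c: "(w = w' \<and> z = y) \<or> (w = y \<and> z = w')" by (simp add: doubleton_eq_iff)
    have "w \<in> cnbhd E w'" if "w' \<in> Y"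
    proof -
      have "w \<in> cnbhd E w" by (simp add: cnbhd_iff)
      then show ?thesis using cY[OF w] cY[OF that] by simp
    qed
    then show "z \<in> nbhd E u - cnbhd E w" using h c by blast
  next
    assume "z \<in> nbhd E u - cnbhd E w" then show "{w,z} \<in> {{w, y} | w y. w \<in> Y \<and> y \<in> nbhd E u - cnbhd E w}"
      using w by blast
  qed
  have uw: "{w,u} \<in> E"
  proof -
    have "u \<in> cnbhd E w" using cY[OF w] vu_in by simp
    moreover have "u \<noteq> w" using w uX XY by blast
    ultimately show ?thesis using cnbhd_iff by metis
  qed
  have "{w,z} \<in> F \<longleftrightarrow> ({w,z} \<in> E \<and> \<not> (z \<in> nbhd E w - cnbhd E u)) \<or> z \<in> nbhd E u - cnbhd E w"
    unfolding F_def' using r s by blast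
  also have "\<dots> \<longleftrightarrow> z \<in> cnbhd E u"
    using zw uw by (auto simp add: cnbhd_iff nbhd_iff insert_commute)
  finally show ?thesis .
qed

end


context side begin

lemma F_graph: "graph V F"
  unfolding graph_def
proof (intro conjI ballI)
  show "finite V" using graph_V[OF gr] .
  fix e assume e: "e \<in> F"
  show "\<exists>x y. e = {x, y} \<and> x \<noteq> y \<and> x \<in> V \<and> y \<in> V"
  proof (cases "e \<in> E")
    case True
    then obtain x y where "e = {x,y}" "x \<noteq> y" "x \<in> V" "y \<in> V" using graph_edge[OF gr] by metis
    then show ?thesis by blast
  next
    case False
    then have "e \<in> {{w, y} | w y. w \<in> Y \<and> y \<in> nbhd E u - cnbhd E w}" using e unfolding F_def' by blast
    then obtain w y where h: "e = {w,y}" "w \<in> Y" "y \<in> nbhd E u - cnbhd E w"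
      unfolding mem_Collect_eq by (elim exE conjE)
    have "w \<in> V" using h(2) YV by blast
    moreover have "{u,y} \<in> E" using h(3) nbhd_iff by fast
    then have "y \<in> V" using edge_sub[OF gr] by blast
    moreover have "y \<noteq> w" using h(3) cnbhd_iff by fast
    ultimately show ?thesis using h(1) by blast
  qed
qed

lemma F_K: assumes k: "k \<in> K" and zk: "z \<noteq> k" shows "{k,z} \<in> F \<longleftrightarrow> z \<in> cnbhd E u"
proof (cases "k \<in> Y")
  case True then show ?thesis using F_Y zk by blast
next
  case False
  then have kX: "k \<in> X" using k by blast
  show ?thesis
  proof (cases "z \<in> Y")
    case True
    have "{z,k} \<in> F \<longleftrightarrow> k \<in> cnbhd E u" using F_Y[OF True] zk by metis
    moreover have "k \<in> cnbhd E u" using k K_cu by blast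
    moreover have "z \<in> cnbhd E u" using True K_cu by blast
    ultimately show ?thesis by (simp add: insert_commute)
  next
    case zY: False
    have "{k,z} \<in> F \<longleftrightarrow> {k,z} \<in> E" using F_off[OF False zY] .
    also have "\<dots> \<longleftrightarrow> z \<in> cnbhd E k" using zk by (simp add: cnbhd_iff)
    also have "\<dots> \<longleftrightarrow> z \<in> cnbhd E u" using cX[OF kX] by simp
    finally show ?thesis .
  qed
qed

lemma F_clique: assumes "a \<in> K" "b \<in> K" "a \<noteq> b" shows "{a,b} \<in> F"
proof -
  have "b \<in> cnbhd E u" using K_cu assms(2) by blast
  moreover have "b \<noteq> a" using assms(3) by simp
  ultimately show ?thesis using F_K[OF assms(1)] by simp
qed

lemma sw_K: "k1 \<in> K \<Longrightarrow> k2 \<in> K \<Longrightarrow> x \<in> K \<Longrightarrow> sw k1 k2 x \<in> K"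
  unfolding sw_def by auto

lemma sw_F: assumes k1: "k1 \<in> K" and k2: "k2 \<in> K" and e: "e \<in> F"
  shows "sw k1 k2 ` e \<in> F"
proof -
  let ?s = "sw k1 k2"
  obtain a b where ab: "e = {a,b}" "a \<noteq> b" using graph_edge[OF F_graph e] by metis
  have img: "?s ` e = {?s a, ?s b}" using ab by simp
  have ne: "?s a \<noteq> ?s b" using ab(2) by (metis sw_sw)
  have cu: "?s x \<in> cnbhd E u" if "x \<in> cnbhd E u" for x
  proof (cases "x = k1 \<or> x = k2")
    case True then have "?s x \<in> K" using sw_K k1 k2 by blast
    then show ?thesis using K_cu by blast
  next
    case False then show ?thesis using that by (simp add: sw_other)
  qed
  have eF: "{a,b} \<in> F" using e ab by simp
  show ?thesis
  proof (cases "a \<in> K")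
    case True
    then have "b \<in> cnbhd E u" using F_K ab(2) eF by metis
    then have "?s b \<in> cnbhd E u" by (rule cu)
    moreover have "?s a \<in> K" using sw_K k1 k2 True by blast
    ultimately have "{?s a, ?s b} \<in> F" using F_K ne by metis
    then show ?thesis using img by simp
  next
    case aK: False
    show ?thesis
    proof (cases "b \<in> K")
      case True
      have eF': "{b,a} \<in> F" using eF by (simp add: insert_commute)
      then have "a \<in> cnbhd E u" using F_K ab(2) True by metis
      then have "?s a \<in> cnbhd E u" by (rule cu)
      moreover have "?s b \<in> K" using sw_K k1 k2 True by blast
      ultimately have "{?s b, ?s a} \<in> F" using F_K ne by metis
      then show ?thesis using img by (simp add: insert_commute)
    next
      case False
      have "?s a = a" using aK k1 k2 by (metis sw_other Un_iff)
      moreover have "?s b = b" using False k1 k2 by (metis sw_other Un_iff)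
      ultimately show ?thesis using img eF by simp
    qed
  qed
qed

lemma cnt_sw: "k1 \<in> K \<Longrightarrow> k2 \<in> K \<Longrightarrow> cnt F (sw k1 k2 ` e) = cnt F e"
  by (rule aut_cnt) (auto intro: sw_F)

lemma C1: assumes k: "k \<in> K" and r: "r \<notin> K" shows "cnt F {k,r} = cnt F {u,r}"
proof -
  have "r \<noteq> k" "r \<noteq> u" using k r uX by blast+
  then have "sw k u r = r" by (simp add: sw_other)
  then have "sw k u ` {k,r} = {u,r}" by simp
  then show ?thesis using cnt_sw[OF k, of u "{k,r}"] uX by simp
qed

lemma C2: assumes e: "e \<in> pairs2 K" shows "cnt F e = cnt F {u,v}"
proof -
  obtain k1 k2 where kk: "e = {k1,k2}" "k1 \<noteq> k2" using e unfolding pairs2_def by (auto simp: card_2_iff)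
  have k1: "k1 \<in> K" and k2: "k2 \<in> K" using e kk unfolding pairs2_def by auto
  define k3 where "k3 = sw k1 u k2"
  have k3K: "k3 \<in> K" unfolding k3_def using sw_K k1 k2 uX by blast
  have k3u: "k3 \<noteq> u" unfolding k3_def using kk(2) by (metis sw_a sw_sw)
  have "sw k1 u ` {k1,k2} = {u,k3}" unfolding k3_def by simp
  then have 1: "cnt F e = cnt F {u,k3}" using cnt_sw[OF k1, of u "{k1,k2}"] uX kk(1) by simp
  have "sw k3 v ` {u,k3} = {u,v}" using k3u unv by (simp add: sw_other)
  then have "cnt F {u,k3} = cnt F {u,v}" using cnt_sw[OF k3K, of v "{u,k3}"] vY by simp
  then show ?thesis using 1 by simp
qed

end


context side begin

lemma C3: assumes k: "k \<in> X" and z: "z \<notin> Y" shows "cnt E {k,z} = cnt F {k,z}"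
proof -
  have eq: "maximal_induced_matching E M \<longleftrightarrow> maximal_induced_matching F M" if kz: "{k,z} \<in> M" for M
  proof (rule MIM_transfer[OF gr F_graph, of "V - Y"])
    fix a b assume "a \<in> V - Y" "b \<in> V - Y"
    then show "{a,b} \<in> E \<longleftrightarrow> {a,b} \<in> F" using F_off by simp
  next
    fix M' assume sub: "M \<subseteq> M'" and im: "induced_matching E M' \<or> induced_matching F M'"
    have kz': "{k,z} \<in> M'" using sub kz by blast
    have cV: "covered M' \<subseteq> V" using im covered_sub[OF gr] covered_sub[OF F_graph] by blast
    have "y \<notin> covered M'" if y: "y \<in> Y" for y
    proof
      assume yc: "y \<in> covered M'"
      have ky: "k \<noteq> y" using k y XY by blast
      have kK: "k \<in> K" "y \<in> K" using k y by blast+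
      have "y = z" using im
      proof
        assume imE: "induced_matching E M'"
        show "y = z" using IM_partner[OF imE kz' yc clique[OF kK ky]] .
      next
        assume imF: "induced_matching F M'"
        show "y = z" using IM_partner[OF imF kz' yc F_clique[OF kK ky]] .
      qed
      then show False using z y by simp
    qed
    then show "covered M' \<subseteq> V - Y" using cV by blast
  qed
  have "{M. maximal_induced_matching E M \<and> {k,z} \<in> M} = {M. maximal_induced_matching F M \<and> {k,z} \<in> M}"
    using eq by blast
  then show ?thesis unfolding cnt_def by simp
qed

lemma C5_cov:
  assumes x0: "x0 \<in> X" and y0: "y0 \<in> Y" and M: "maximal_induced_matching E M" "{x0,y0} \<in> M"
    and c: "c \<in> covered M"
  shows "(c \<in> Y \<longrightarrow> c = y0) \<and> (c \<noteq> x0 \<and> c \<noteq> y0 \<longrightarrow> c \<notin> cnbhd E u \<and> c \<notin> cnbhd E v)"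
proof -
  have im: "induced_matching E M" using MIM_IM[OF M(1)] .
  have M2: "{y0,x0} \<in> M" using M(2) by (simp add: insert_commute)
  have i: "c = y0" if cY': "c \<in> Y"
  proof -
    have "x0 \<noteq> c" using x0 cY' XY by blast
    then have "{x0,c} \<in> E" using clique x0 cY' by blast
    then show ?thesis using IM_partner[OF im M(2) c] by blast
  qed
  have ii: "c \<notin> cnbhd E u \<and> c \<notin> cnbhd E v" if ne: "c \<noteq> x0" "c \<noteq> y0"
  proof
    show "c \<notin> cnbhd E u"
    proof
      assume "c \<in> cnbhd E u"
      then have "c \<in> cnbhd E x0" using cX[OF x0] by simp
      then have "{x0,c} \<in> E" using ne(1) cnbhd_iff by metis
      then show False using IM_partner[OF im M(2) c] ne(2) by blast
    qed
    show "c \<notin> cnbhd E v"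
    proof
      assume "c \<in> cnbhd E v"
      then have "c \<in> cnbhd E y0" using cY[OF y0] by simp
      then have "{y0,c} \<in> E" using ne(2) cnbhd_iff by metis
      then show False using IM_partner[OF im M2 c] ne(1) by blast
    qed
  qed
  show ?thesis using i ii by blast
qed

lemma C5_ag1:
  assumes x0: "x0 \<in> X" and y0: "y0 \<in> Y"
    and a: "a \<in> Y" and ha: "a = y0"
    and hb: "b \<noteq> x0 \<and> b \<noteq> y0 \<longrightarrow> b \<notin> cnbhd E u \<and> b \<notin> cnbhd E v"
    and bY: "b \<in> Y \<longrightarrow> b = y0"
  shows "{a,b} \<in> E \<longleftrightarrow> {a,b} \<in> F"
proof (cases "b = x0")
  case True
  have "x0 \<noteq> y0" using x0 y0 XY by blast
  then show ?thesis using clique[of y0 x0] F_clique[of y0 x0] x0 y0 True ha by auto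
next
  case False
  show ?thesis
  proof (cases "b = y0")
    case True
    then have "{a,b} = {y0}" using ha by simp
    moreover have "{y0} \<notin> E" using edge_sub[OF gr, of y0 y0] by auto
    moreover have "{y0} \<notin> F" using edge_sub[OF F_graph, of y0 y0] by auto
    ultimately show ?thesis by simp
  next
    case bne: False
    have nb: "b \<notin> cnbhd E u" "b \<notin> cnbhd E v" using hb False bne by blast+
    have "{y0,b} \<in> F \<longleftrightarrow> b \<in> cnbhd E u" using F_Y[OF y0] bne by metis
    moreover have "{y0,b} \<in> E \<longleftrightarrow> b \<in> cnbhd E y0" using bne by (simp add: cnbhd_iff)
    moreover have "cnbhd E y0 = cnbhd E v" using cY[OF y0] .
    ultimately show ?thesis using nb ha by simp
  qed
qed

lemma C5_ag:
  assumes x0: "x0 \<in> X" and y0: "y0 \<in> Y"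
    and M1: "maximal_induced_matching E M1" "{x0,y0} \<in> M1"
    and M2: "maximal_induced_matching E M2" "{x0,y0} \<in> M2"
    and a: "a \<in> covered M1 \<union> covered M2" and b: "b \<in> covered M1 \<union> covered M2"
  shows "{a,b} \<in> E \<longleftrightarrow> {a,b} \<in> F"
proof -
  have pa: "(a \<in> Y \<longrightarrow> a = y0) \<and> (a \<noteq> x0 \<and> a \<noteq> y0 \<longrightarrow> a \<notin> cnbhd E u \<and> a \<notin> cnbhd E v)"
    using a C5_cov[OF x0 y0 M1] C5_cov[OF x0 y0 M2] by blast
  have pb: "(b \<in> Y \<longrightarrow> b = y0) \<and> (b \<noteq> x0 \<and> b \<noteq> y0 \<longrightarrow> b \<notin> cnbhd E u \<and> b \<notin> cnbhd E v)"
    using b C5_cov[OF x0 y0 M1] C5_cov[OF x0 y0 M2] by blast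
  show ?thesis
  proof (cases "a \<in> Y")
    case True
    have "a = y0" using pa True by blast
    then show ?thesis using C5_ag1[OF x0 y0 True _ conjunct2[OF pb] conjunct1[OF pb]] by blast
  next
    case aY: False
    show ?thesis
    proof (cases "b \<in> Y")
      case True
      have "b = y0" using pb True by blast
      then have "{b,a} \<in> E \<longleftrightarrow> {b,a} \<in> F" using C5_ag1[OF x0 y0 True _ conjunct2[OF pa] conjunct1[OF pa]] by blast
      then show ?thesis by (simp add: insert_commute)
    next
      case False
      show ?thesis using F_off[OF aY False] by simp
    qed
  qed
qed

lemma C5: assumes x0: "x0 \<in> X" and y0: "y0 \<in> Y" shows "cnt E {x0,y0} \<le> cnt F {x0,y0}"
proof -
  let ?A = "{M. maximal_induced_matching E M \<and> {x0,y0} \<in> M}"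
  let ?B = "{M. maximal_induced_matching F M \<and> {x0,y0} \<in> M}"
  define ext where "ext = (\<lambda>M. SOME M'. M \<subseteq> M' \<and> maximal_induced_matching F M')"
  have ext: "M \<subseteq> ext M \<and> maximal_induced_matching F (ext M)" if "M \<in> ?A" for M
  proof -
    have m: "maximal_induced_matching E M" "{x0,y0} \<in> M" using that by blast+
    have "induced_matching F M"
    proof (rule IM_transfer[OF gr _ order_refl MIM_IM[OF m(1)]])
      fix a b assume "a \<in> covered M" "b \<in> covered M"
      then show "{a,b} \<in> E \<longleftrightarrow> {a,b} \<in> F" using C5_ag[OF x0 y0 m m] by blast
    qed
    then have "\<exists>M'. M \<subseteq> M' \<and> maximal_induced_matching F M'" by (rule MIM_extend[OF F_graph])
    then show ?thesis unfolding ext_def by (rule someI_ex)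
  qed
  have "ext ` ?A \<subseteq> ?B" using ext by blast
  moreover have "inj_on ext ?A"
  proof (rule inj_onI)
    fix M1 M2 assume M1: "M1 \<in> ?A" and M2: "M2 \<in> ?A" and eq: "ext M1 = ext M2"
    have m1: "maximal_induced_matching E M1" "{x0,y0} \<in> M1" using M1 by blast+
    have m2: "maximal_induced_matching E M2" "{x0,y0} \<in> M2" using M2 by blast+
    have "M1 \<union> M2 \<subseteq> ext M1" using ext[OF M1] ext[OF M2] eq by blast
    moreover have "induced_matching F (ext M1)" using ext[OF M1] MIM_IM by blast
    ultimately show "M1 = M2"
      using MIM_unique[OF gr F_graph m1(1) m2(1)] C5_ag[OF x0 y0 m1 m2] by blast
  qed
  moreover have "finite ?B" using MIM_fin[OF F_graph] unfolding MIM_def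
    by (rule finite_subset[rotated]) blast
  ultimately have "card ?A \<le> card ?B" by (meson card_inj_on_le)
  then show ?thesis unfolding cnt_def .
qed

end


context side begin

lemma C6_key:
  assumes M: "maximal_induced_matching E M" and cK: "covered M \<inter> K = {}"
  shows "\<exists>s \<in> covered M. {u,s} \<in> E"
proof (rule ccontr)
  assume nu: "\<not> (\<exists>s \<in> covered M. {u,s} \<in> E)"
  have im: "induced_matching E M" using MIM_IM[OF M] .
  have uc: "u \<notin> covered M" and vc: "v \<notin> covered M" using cK uX vY by blast+
  show False
  proof (cases "\<exists>s \<in> covered M. {v,s} \<in> E")
    case True
    then obtain s where s: "s \<in> covered M" "{v,s} \<in> E" by blast
    have cV: "covered M \<subseteq> V" using covered_sub[OF gr im] .
    have "covered M \<subseteq> (nbhd E v - cnbhd E u) \<union> (V - (cnbhd E u \<union> cnbhd E v))"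
    proof
      fix c assume c: "c \<in> covered M"
      have "c \<noteq> u" using c uc by blast
      then have cu: "c \<notin> cnbhd E u" using nu c cnbhd_iff by metis
      have "c \<noteq> v" using c vc by blast
      then have "c \<in> nbhd E v \<or> c \<notin> cnbhd E v" using cnbhd_iff nbhd_iff by metis
      then show "c \<in> (nbhd E v - cnbhd E u) \<union> (V - (cnbhd E u \<union> cnbhd E v))" using cu c cV by blast
    qed
    moreover have "s \<in> covered M \<inter> (nbhd E v - cnbhd E u)"
    proof -
      have "s \<noteq> u" using s uc by blast
      then have "s \<notin> cnbhd E u" using nu s cnbhd_iff by metis
      moreover have "s \<in> nbhd E v" using s(2) nbhd_iff by metis
      ultimately show ?thesis using s(1) by blast
    qed
    ultimately show False using hyp M by blast
  next
    case False
    let ?M = "insert {u,v} M"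
    have cov: "covered ?M = {u,v} \<union> covered M" unfolding covered_def by auto
    have nuv: "{u,v} \<notin> M" using uc unfolding covered_def by blast
    have "induced_matching E ?M"
    proof (rule IM_intro)
      show "?M \<subseteq> E" using IM_subF[OF im] uv by blast
      show "e \<inter> f = {}" if e: "e \<in> ?M" and f: "f \<in> ?M" and ne: "e \<noteq> f" for e f
      proof -
        have dj: "{u,v} \<inter> g = {}" if "g \<in> M" for g using uc vc that unfolding covered_def by blast
        show ?thesis
        proof (cases "e = {u,v}")
          case True then have "f \<in> M" using f ne by blast
          then show ?thesis using dj True by blast
        next
          case eF: False
          then have eM: "e \<in> M" using e by blast
          show ?thesis
          proof (cases "f = {u,v}")
            case True then show ?thesis using dj[OF eM] by blast
          next
            case False then have "f \<in> M" using f by blast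
            then show ?thesis using IM_disj[OF im eM _ ne] by blast
          qed
        qed
      qed
      fix x assume x: "x \<in> covered ?M"
      have nn: "\<And>c. c \<in> covered M \<Longrightarrow> u \<notin> nbhd E c \<and> v \<notin> nbhd E c"
        using nu False by (auto simp: nbhd_iff insert_commute)
      have uu: "u \<notin> nbhd E u" "v \<notin> nbhd E v" using edge_sub[OF gr, of u u] edge_sub[OF gr, of v v] by (auto simp: nbhd_iff)
      have vu: "v \<in> nbhd E u" "u \<in> nbhd E v" using uv by (auto simp: nbhd_iff insert_commute)
      have ncu: "nbhd E u \<inter> covered M = {}" using nu by (auto simp: nbhd_iff)
      have ncv: "nbhd E v \<inter> covered M = {}" using False by (auto simp: nbhd_iff)
      consider "x = u" | "x = v" | "x \<in> covered M" using x cov by blast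
      then show "card (nbhd E x \<inter> covered ?M) = 1"
      proof cases
        case 1
        have "nbhd E x \<inter> covered ?M = {v}" unfolding cov 1 using uu vu ncu by blast
        then show ?thesis by simp
      next
        case 2
        have "nbhd E x \<inter> covered ?M = {u}" unfolding cov 2 using uu vu ncv by blast
        then show ?thesis by simp
      next
        case 3
        have "nbhd E x \<inter> covered ?M = nbhd E x \<inter> covered M" unfolding cov using nn[OF 3] by blast
        then show ?thesis using IM_card[OF im 3] by simp
      qed
    qed
    moreover have "M \<subset> ?M" using nuv by blast
    ultimately show False using MIM_max[OF M] by blast
  qed
qed

lemma C6: assumes M: "maximal_induced_matching E M" and cK: "covered M \<inter> K = {}"
  shows "maximal_induced_matching F M"
proof (rule MIM_intro)
  have im: "induced_matching E M" using MIM_IM[OF M] .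
  have agW: "\<And>a b. a \<in> V - Y \<Longrightarrow> b \<in> V - Y \<Longrightarrow> {a,b} \<in> E \<longleftrightarrow> {a,b} \<in> F" using F_off by simp
  have agW': "\<And>a b. a \<in> V - Y \<Longrightarrow> b \<in> V - Y \<Longrightarrow> {a,b} \<in> F \<longleftrightarrow> {a,b} \<in> E" using F_off by simp
  have cW: "covered M \<subseteq> V - Y" using covered_sub[OF gr im] cK by blast
  show imF: "induced_matching F M" using IM_transfer[OF gr agW cW im] .
  fix M' assume M': "induced_matching F M'" "M \<subset> M'"
  show False
  proof (cases "covered M' \<inter> Y = {}")
    case True
    then have "covered M' \<subseteq> V - Y" using covered_sub[OF F_graph M'(1)] by blast
    then have "induced_matching E M'" using IM_transfer[OF F_graph agW' _ M'(1)] by blast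
    then show False using MIM_max[OF M] M'(2) by blast
  next
    case False
    then obtain y where y: "y \<in> Y" "y \<in> covered M'" by blast
    obtain s where s: "s \<in> covered M" "{u,s} \<in> E" using C6_key[OF M cK] by blast
    have sK: "s \<notin> K" using s cK by blast
    then have sy: "s \<noteq> y" using y by blast
    have "s \<in> cnbhd E u" using s(2) by (simp add: cnbhd_iff)
    then have ysF: "{y,s} \<in> F" using F_Y[OF y(1) sy] by simp
    obtain e where e: "e \<in> M'" "y \<in> e" using y(2) unfolding covered_def by blast
    have "e \<in> F" using e IM_subF[OF M'(1)] by blast
    then obtain q where q: "e = {y,q}" using graph_edge_at[OF F_graph _ e(2)] by metis
    have sc': "s \<in> covered M'" using s(1) M'(2) unfolding covered_def by blast
    have "s = q" using IM_partner[OF M'(1) _ sc' ysF] e(1) q by blast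
    then have ysM: "{y,s} \<in> M'" using e(1) q by simp
    obtain e' where e': "e' \<in> M" "s \<in> e'" using s(1) unfolding covered_def by blast
    have "y \<notin> e'" using e' cK y(1) unfolding covered_def by blast
    then have "e' \<noteq> {y,s}" by blast
    moreover have "e' \<in> M'" using e' M'(2) by blast
    ultimately have "e' \<inter> {y,s} = {}" using IM_disj[OF M'(1) _ ysM] by blast
    then show False using e'(2) by blast
  qed
qed

definition "tau = (\<Sum>r\<in>V - K. cnt F {u,r})"
definition "aa = cnt F {u,v}"

lemma sum_prod_split: "(\<Sum>p\<in>A \<times> B. f (fst p) (snd p)) = (\<Sum>a\<in>A. \<Sum>b\<in>B. f a b)"
  by (simp add: sum.cartesian_product split_def)

lemma S1: "(\<Sum>p\<in>K \<times> (V - K). cnt F {fst p, snd p}) = card K * tau"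
proof -
  have "(\<Sum>p\<in>K \<times> (V - K). cnt F {fst p, snd p}) = (\<Sum>k\<in>K. \<Sum>r\<in>V - K. cnt F {k, r})"
    by (rule sum_prod_split)
  also have "\<dots> = (\<Sum>k\<in>K. tau)" unfolding tau_def
    by (rule sum.cong[OF refl], rule sum.cong[OF refl]) (simp add: C1)
  finally show ?thesis by simp
qed

lemma S2: "(\<Sum>p\<in>X \<times> (V - K). cnt E {fst p, snd p}) = card X * tau"
proof -
  have "(\<Sum>p\<in>X \<times> (V - K). cnt E {fst p, snd p}) = (\<Sum>k\<in>X. \<Sum>r\<in>V - K. cnt E {k, r})"
    by (rule sum_prod_split)
  also have "\<dots> = (\<Sum>k\<in>X. tau)" unfolding tau_def
  proof (rule sum.cong[OF refl], rule sum.cong[OF refl])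
    fix k r assume k: "k \<in> X" and r: "r \<in> V - K"
    have "cnt E {k,r} = cnt F {k,r}" using C3[OF k] r by blast
    also have "\<dots> = cnt F {u,r}" using C1[of k r] k r by blast
    finally show "cnt E {k,r} = cnt F {u,r}" .
  qed
  finally show ?thesis by simp
qed

lemma S3: "(\<Sum>e\<in>pairs2 K. cnt F e) = card (pairs2 K) * aa"
proof -
  have "(\<Sum>e\<in>pairs2 K. cnt F e) = (\<Sum>e\<in>pairs2 K. aa)" unfolding aa_def
    by (rule sum.cong[OF refl]) (rule C2)
  then show ?thesis by simp
qed

lemma pairs2_mono: "A \<subseteq> B \<Longrightarrow> pairs2 A \<subseteq> pairs2 B" unfolding pairs2_def by blast

lemma S4: "(\<Sum>e\<in>pairs2 X. cnt E e) = card (pairs2 X) * aa"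
proof -
  have "(\<Sum>e\<in>pairs2 X. cnt E e) = (\<Sum>e\<in>pairs2 X. aa)" unfolding aa_def
  proof (rule sum.cong[OF refl])
    fix e assume e: "e \<in> pairs2 X"
    obtain k1 k2 where kk: "e = {k1,k2}" "k1 \<noteq> k2" using e unfolding pairs2_def by (auto simp: card_2_iff)
    have k1: "k1 \<in> X" and k2: "k2 \<in> X" using e kk unfolding pairs2_def by auto
    have "k2 \<notin> Y" using k2 XY by blast
    then have "cnt E e = cnt F e" using C3[OF k1] kk(1) by simp
    also have "\<dots> = cnt F {u,v}" using C2 e pairs2_mono[of X K] by blast
    finally show "cnt E e = cnt F {u,v}" .
  qed
  then show ?thesis by simp
qed

definition "XYs = (\<lambda>p. {fst p, snd p}) ` (X \<times> Y)"

lemma S5: "(\<Sum>e\<in>XYs. cnt E e) \<le> card XYs * aa"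
proof -
  have "\<forall>e\<in>XYs. cnt E e \<le> aa"
  proof
    fix e assume "e \<in> XYs"
    then obtain x0 y0 where h: "x0 \<in> X" "y0 \<in> Y" "e = {x0,y0}" unfolding XYs_def by auto
    have "x0 \<noteq> y0" using h XY by blast
    then have "{x0,y0} \<in> pairs2 K" unfolding pairs2_def using h by auto
    then have "cnt F {x0,y0} = aa" unfolding aa_def by (rule C2)
    then show "cnt E e \<le> aa" using C5[OF h(1,2)] h(3) by simp
  qed
  then show ?thesis using sum_bounded_above[of XYs "cnt E" aa] by simp
qed

lemma S6: "card (MIM F) = card {M \<in> MIM F. covered M \<inter> K = {}} + card K * tau + card (pairs2 K) * aa"
  using decomp[OF F_graph KV F_clique] S1 S3 by simp

lemma S7: "card {M \<in> MIM E. covered M \<inter> K = {}} \<le> card {M \<in> MIM F. covered M \<inter> K = {}}"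
proof (rule card_mono)
  show "finite {M \<in> MIM F. covered M \<inter> K = {}}" using MIM_fin[OF F_graph] by simp
  show "{M \<in> MIM E. covered M \<inter> K = {}} \<subseteq> {M \<in> MIM F. covered M \<inter> K = {}}"
    using C6 unfolding MIM_def by blast
qed

end


lemma arith_core:
  fixes Za Zb Zc ta tb pa pb s x y cx cy ck n nb nc :: int
  assumes hn: "n = Za + x*ta + y*tb + cx*pa + cy*pb + s"
    and hn1: "nb = Zb + (x+y)*ta + ck*pa" and hn2: "nc = Zc + (x+y)*tb + ck*pb"
    and "Za \<le> Zb" "Za \<le> Zc" "s \<le> x*y*pa" "s \<le> x*y*pb"
    and hx: "2*cx + x = x*x" and hy: "2*cy + y = y*y" and hk: "2*ck + (x+y) = (x+y)*(x+y)"
    and "x \<ge> 0" "y \<ge> 0"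
  shows "(x+y)*n \<le> x*nb + y*nc"
proof -
  have id: "2*((x*nb + y*nc) - (x+y)*n) = 2*x*(Zb-Za) + 2*y*(Zc-Za) + (x+y)*(x*y*pa - s) + (x+y)*(x*y*pb - s)"
    using hn hn1 hn2 hx hy hk by algebra
  have "0 \<le> 2*x*(Zb-Za)" using assms by simp
  moreover have "0 \<le> 2*y*(Zc-Za)" using assms by simp
  moreover have "0 \<le> (x+y)*(x*y*pa - s)" using assms by simp
  moreover have "0 \<le> (x+y)*(x*y*pb - s)" using assms by simp
  ultimately have "0 \<le> 2*x*(Zb-Za) + 2*y*(Zc-Za) + (x+y)*(x*y*pa - s) + (x+y)*(x*y*pb - s)"
    by (intro add_nonneg_nonneg)
  then have "0 \<le> 2*((x*nb + y*nc) - (x+y)*n)" by (subst id)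
  then show ?thesis by simp
qed

lemma choose2: "2 * (n choose 2) + n = n * (n::nat)"
proof (induction n)
  case 0 then show ?case by simp
next
  case (Suc n)
  have "Suc n choose 2 = (n choose 1) + (n choose 2)"
    by (metis Suc_1 binomial_Suc_Suc)
  then show ?case using Suc by simp
qed

lemma pairs2_card: "finite A \<Longrightarrow> card (pairs2 A) = card A choose 2"
  unfolding pairs2_def by (rule n_subsets)

lemma pairs2_fin: "finite A \<Longrightarrow> finite (pairs2 A)"
proof -
  assume "finite A"
  moreover have "pairs2 A \<subseteq> Pow A" unfolding pairs2_def by blast
  ultimately show ?thesis by (meson finite_Pow_iff finite_subset)
qed

lemma pairs2_Un:
  assumes XY: "X \<inter> Y = {}"
  shows "pairs2 (X \<union> Y) = pairs2 X \<union> pairs2 Y \<union> (\<lambda>p. {fst p, snd p}) ` (X \<times> Y)"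
proof (rule set_eqI)
  fix e
  show "e \<in> pairs2 (X \<union> Y) \<longleftrightarrow> e \<in> pairs2 X \<union> pairs2 Y \<union> (\<lambda>p. {fst p, snd p}) ` (X \<times> Y)"
  proof
    assume e: "e \<in> pairs2 (X \<union> Y)"
    obtain a b where ab: "e = {a,b}" "a \<noteq> b" using e unfolding pairs2_def by (auto simp: card_2_iff)
    have a: "a \<in> X \<union> Y" and b: "b \<in> X \<union> Y" using e ab unfolding pairs2_def by auto
    have c2: "card e = 2" using ab by simp
    show "e \<in> pairs2 X \<union> pairs2 Y \<union> (\<lambda>p. {fst p, snd p}) ` (X \<times> Y)"
    proof (cases "a \<in> X")
      case aX: True
      show ?thesis
      proof (cases "b \<in> X")
        case True then have "e \<in> pairs2 X" unfolding pairs2_def using aX ab c2 by simp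
        then show ?thesis by blast
      next
        case False then have "b \<in> Y" using b by blast
        then have "(a,b) \<in> X \<times> Y" using aX by simp
        moreover have "e = {fst (a,b), snd (a,b)}" using ab by simp
        ultimately show ?thesis by blast
      qed
    next
      case aX: False
      then have aY: "a \<in> Y" using a by blast
      show ?thesis
      proof (cases "b \<in> X")
        case True
        then have "(b,a) \<in> X \<times> Y" using aY by simp
        moreover have "e = {fst (b,a), snd (b,a)}" using ab by (simp add: insert_commute)
        ultimately show ?thesis by blast
      next
        case False then have "b \<in> Y" using b by blast
        then have "e \<in> pairs2 Y" unfolding pairs2_def using aY ab c2 by simp
        then show ?thesis by blast
      qed
    qed
  next
    assume "e \<in> pairs2 X \<union> pairs2 Y \<union> (\<lambda>p. {fst p, snd p}) ` (X \<times> Y)"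
    then consider "e \<in> pairs2 X" | "e \<in> pairs2 Y" | "e \<in> (\<lambda>p. {fst p, snd p}) ` (X \<times> Y)" by blast
    then show "e \<in> pairs2 (X \<union> Y)"
    proof cases
      case 1 then show ?thesis unfolding pairs2_def by blast
    next
      case 2 then show ?thesis unfolding pairs2_def by blast
    next
      case 3
      then obtain a b where h: "a \<in> X" "b \<in> Y" "e = {a,b}" by auto
      have "a \<noteq> b" using h XY by blast
      then show ?thesis unfolding pairs2_def using h by simp
    qed
  qed
qed

lemma XY_img_card:
  assumes XY: "X \<inter> Y = {}" and fX: "finite X" and fY: "finite Y"
  shows "card ((\<lambda>p. {fst p, snd p}) ` (X \<times> Y)) = card X * card Y"
proof -
  have "inj_on (\<lambda>p. {fst p, snd p}) (X \<times> Y)"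
  proof (rule inj_onI)
    fix p q assume p: "p \<in> X \<times> Y" and q: "q \<in> X \<times> Y" and eq: "{fst p, snd p} = {fst q, snd q}"
    then show "p = q" using XY by (auto simp: doubleton_eq_iff prod_eq_iff)
  qed
  then show ?thesis by (simp add: card_image card_cartesian_product)
qed

lemma sum_pairs2_Un:
  assumes XY: "X \<inter> Y = {}" and fX: "finite X" and fY: "finite Y"
  shows "(\<Sum>e\<in>pairs2 (X \<union> Y). f e) = (\<Sum>e\<in>pairs2 X. f e) + (\<Sum>e\<in>pairs2 Y. f e)
           + (\<Sum>e\<in>(\<lambda>p. {fst p, snd p}) ` (X \<times> Y). f e)"
proof -
  let ?I = "(\<lambda>p. {fst p, snd p}) ` (X \<times> Y)"
  have f1: "finite (pairs2 X)" "finite (pairs2 Y)" using pairs2_fin fX fY by blast+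
  have f2: "finite ?I" using fX fY by simp
  have d1: "pairs2 X \<inter> pairs2 Y = {}"
  proof -
    have "e = {}" if "e \<in> pairs2 X" "e \<in> pairs2 Y" for e using that XY unfolding pairs2_def by blast
    moreover have "{} \<notin> pairs2 X" unfolding pairs2_def by simp
    ultimately show ?thesis by blast
  qed
  have d2: "(pairs2 X \<union> pairs2 Y) \<inter> ?I = {}"
  proof -
    have "e \<notin> pairs2 X \<union> pairs2 Y" if eI: "e \<in> ?I" for e
    proof -
      obtain a b where h: "a \<in> X" "b \<in> Y" "e = {a,b}" using eI by auto
      then show ?thesis using XY unfolding pairs2_def by blast
    qed
    then show ?thesis by blast
  qed
  show ?thesis
    unfolding pairs2_Un[OF XY]
    by (simp add: sum.union_disjoint f1 f2 d1 d2)
qed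

lemma twin_case:
  assumes "cnbhd E u = cnbhd E v"
  shows "make_twins E (twins V E u) v = E"
proof -
  have r: "{{w, x} | w x. w \<in> twins V E u \<and> x \<in> nbhd E w - cnbhd E v} = {}"
  proof -
    have "nbhd E w - cnbhd E v = {}" if "w \<in> twins V E u" for w
      using that assms unfolding twins_def cnbhd_def by auto
    then show ?thesis by blast
  qed
  have s: "{{w, y} | w y. w \<in> twins V E u \<and> y \<in> nbhd E v - cnbhd E w} = {}"
  proof -
    have "nbhd E v - cnbhd E w = {}" if "w \<in> twins V E u" for w
      using that assms unfolding twins_def cnbhd_def by auto
    then show ?thesis by blast
  qed
  show ?thesis unfolding make_twins_def r s by simp
qed


theorem lemma2p3:
  fixes V :: "'a set" and E :: "'a set set" and u v :: 'a
  assumes "graph V E"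
    and "{u, v} \<in> E"
    and "\<not> (\<exists>M. maximal_induced_matching E M \<and>
            covered M \<subseteq> (nbhd E u - cnbhd E v) \<union> (V - (cnbhd E u \<union> cnbhd E v)) \<and>
            covered M \<inter> (nbhd E u - cnbhd E v) \<noteq> {})"
    and "\<not> (\<exists>M. maximal_induced_matching E M \<and>
            covered M \<subseteq> (nbhd E v - cnbhd E u) \<union> (V - (cnbhd E u \<union> cnbhd E v)) \<and>
            covered M \<inter> (nbhd E v - cnbhd E u) \<noteq> {})"
  shows "card (MIM (make_twins E (twins V E u) v)) \<ge> card (MIM E)
       \<or> card (MIM (make_twins E (twins V E v) u)) \<ge> card (MIM E)"
proof (cases "cnbhd E u = cnbhd E v")
  case True
  then show ?thesis using twin_case[OF True] by simp
next
  case nt: False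
  have sd1: "side V E u v" unfolding side_def using assms(1,2,4) nt by blast
  have u2: "(V - (cnbhd E v \<union> cnbhd E u)) = (V - (cnbhd E u \<union> cnbhd E v))" by blast
  have sd2: "side V E v u" unfolding side_def
    using assms(1,2,3) nt by (simp add: insert_commute u2 eq_commute[of "cnbhd E v"])
  interpret s1: side V E u v by (rule sd1)
  interpret s2: side V E v u by (rule sd2)
  let ?X = "twins V E u" and ?Y = "twins V E v"
  let ?K = "?X \<union> ?Y"
  have KK: "?Y \<union> ?X = ?K" by blast
  have finV: "finite V" using graph_V[OF assms(1)] .
  have fX: "finite ?X" using finite_subset[OF s1.XV finV] .
  have fY: "finite ?Y" using finite_subset[OF s1.YV finV] .
  have XY: "?X \<inter> ?Y = {}" by (rule s1.XY)
  define T0 where "T0 = card {M \<in> MIM E. covered M \<inter> ?K = {}}"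
  define T1 where "T1 = card {M \<in> MIM s1.F. covered M \<inter> ?K = {}}"
  define T2 where "T2 = card {M \<in> MIM s2.F. covered M \<inter> ?K = {}}"
  define S where "S = (\<Sum>e\<in>s1.XYs. cnt E e)"
  have dE: "card (MIM E) = T0 + (\<Sum>p\<in>?K \<times> (V - ?K). cnt E {fst p, snd p}) + (\<Sum>e\<in>pairs2 ?K. cnt E e)"
    unfolding T0_def using decomp[OF assms(1) s1.KV s1.clique] by simp
  have sKR: "(\<Sum>p\<in>?K \<times> (V - ?K). cnt E {fst p, snd p})
     = (\<Sum>p\<in>?X \<times> (V - ?K). cnt E {fst p, snd p}) + (\<Sum>p\<in>?Y \<times> (V - ?K). cnt E {fst p, snd p})"
  proof -
    have "?K \<times> (V - ?K) = ?X \<times> (V - ?K) \<union> ?Y \<times> (V - ?K)" by blast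
    moreover have "(?X \<times> (V - ?K)) \<inter> (?Y \<times> (V - ?K)) = {}" using XY by blast
    moreover have "finite (?X \<times> (V - ?K))" "finite (?Y \<times> (V - ?K))" using fX fY finV by simp_all
    ultimately show ?thesis by (simp add: sum.union_disjoint)
  qed
  have s2S2: "(\<Sum>p\<in>?Y \<times> (V - ?K). cnt E {fst p, snd p}) = card ?Y * s2.tau"
    using s2.S2 KK by simp
  have XYs_eq: "s2.XYs = s1.XYs"
  proof -
    have "(\<lambda>p. {fst p, snd p}) ` (?Y \<times> ?X) = (\<lambda>p. {fst p, snd p}) ` (?X \<times> ?Y)"
    proof (rule set_eqI)
      fix e
      show "e \<in> (\<lambda>p. {fst p, snd p}) ` (?Y \<times> ?X) \<longleftrightarrow> e \<in> (\<lambda>p. {fst p, snd p}) ` (?X \<times> ?Y)"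
      proof
        assume "e \<in> (\<lambda>p. {fst p, snd p}) ` (?Y \<times> ?X)"
        then obtain a b where h: "a \<in> ?Y" "b \<in> ?X" "e = {a,b}" by auto
        then have "(b,a) \<in> ?X \<times> ?Y" "e = {fst (b,a), snd (b,a)}" by (simp_all add: insert_commute)
        then show "e \<in> (\<lambda>p. {fst p, snd p}) ` (?X \<times> ?Y)" by blast
      next
        assume "e \<in> (\<lambda>p. {fst p, snd p}) ` (?X \<times> ?Y)"
        then obtain a b where h: "a \<in> ?X" "b \<in> ?Y" "e = {a,b}" by auto
        then have "(b,a) \<in> ?Y \<times> ?X" "e = {fst (b,a), snd (b,a)}" by (simp_all add: insert_commute)
        then show "e \<in> (\<lambda>p. {fst p, snd p}) ` (?Y \<times> ?X)" by blast
      qed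
    qed
    then show ?thesis unfolding s1.XYs_def s2.XYs_def .
  qed
  have sP: "(\<Sum>e\<in>pairs2 ?K. cnt E e) = card (pairs2 ?X) * s1.aa + card (pairs2 ?Y) * s2.aa + S"
    unfolding S_def s1.XYs_def using sum_pairs2_Un[OF XY fX fY, of "cnt E"] s1.S4 s2.S4 by simp
  have SX: "S \<le> card s1.XYs * s1.aa" unfolding S_def by (rule s1.S5)
  have SY: "S \<le> card s1.XYs * s2.aa" unfolding S_def using s2.S5 XYs_eq by simp
  have cXY: "card s1.XYs = card ?X * card ?Y" unfolding s1.XYs_def using XY_img_card[OF XY fX fY] .
  have n: "card (MIM E) = T0 + card ?X * s1.tau + card ?Y * s2.tau
          + card (pairs2 ?X) * s1.aa + card (pairs2 ?Y) * s2.aa + S"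
    using dE sKR s1.S2 s2S2 sP by simp
  have n1: "card (MIM s1.F) = T1 + card ?K * s1.tau + card (pairs2 ?K) * s1.aa"
    unfolding T1_def using s1.S6 .
  have n2: "card (MIM s2.F) = T2 + card ?K * s2.tau + card (pairs2 ?K) * s2.aa"
    unfolding T2_def using s2.S6 KK by simp
  have t1: "T0 \<le> T1" unfolding T0_def T1_def using s1.S7 .
  have t2: "T0 \<le> T2" unfolding T0_def T2_def using s2.S7 KK by simp
  have cK: "card ?K = card ?X + card ?Y" using card_Un_disjoint[OF fX fY XY] .
  have fK: "finite ?K" using fX fY by simp
  have px: "card (pairs2 ?X) = card ?X choose 2" using pairs2_card[OF fX] .
  have py: "card (pairs2 ?Y) = card ?Y choose 2" using pairs2_card[OF fY] .
  have pk: "card (pairs2 ?K) = card ?K choose 2" using pairs2_card[OF fK] .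
  define x where "x = card ?X"
  define y where "y = card ?Y"
  have x1: "x \<ge> 1" unfolding x_def using s1.uX fX by (metis One_nat_def card_0_eq empty_iff less_one not_le)
  have main: "(int x + int y) * int (card (MIM E)) \<le> int x * int (card (MIM s1.F)) + int y * int (card (MIM s2.F))"
  proof (rule arith_core[where Za = "int T0" and Zb = "int T1" and Zc = "int T2"
        and ta = "int s1.tau" and tb = "int s2.tau" and pa = "int s1.aa" and pb = "int s2.aa"
        and s = "int S" and cx = "int (x choose 2)" and cy = "int (y choose 2)" and ck = "int ((x+y) choose 2)"])
    show "int (card (MIM E)) = int T0 + int x * int s1.tau + int y * int s2.tau
        + int (x choose 2) * int s1.aa + int (y choose 2) * int s2.aa + int S"
      using n px py unfolding x_def y_def by simp
    show "int (card (MIM s1.F)) = int T1 + (int x + int y) * int s1.tau + int ((x+y) choose 2) * int s1.aa"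
      using n1 pk cK unfolding x_def y_def by simp
    show "int (card (MIM s2.F)) = int T2 + (int x + int y) * int s2.tau + int ((x+y) choose 2) * int s2.aa"
      using n2 pk cK unfolding x_def y_def by simp
    show "int T0 \<le> int T1" "int T0 \<le> int T2" using t1 t2 by simp_all
    show "int S \<le> int x * int y * int s1.aa" using SX cXY unfolding x_def y_def by (simp add: of_nat_mult[symmetric] del: of_nat_mult)
    show "int S \<le> int x * int y * int s2.aa" using SY cXY unfolding x_def y_def by (simp add: of_nat_mult[symmetric] del: of_nat_mult)
    show "2 * int (x choose 2) + int x = int x * int x" using choose2[of x] by (simp add: of_nat_mult[symmetric] del: of_nat_mult)
    show "2 * int (y choose 2) + int y = int y * int y" using choose2[of y] by (simp add: of_nat_mult[symmetric] del: of_nat_mult)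
    show "2 * int ((x+y) choose 2) + (int x + int y) = (int x + int y) * (int x + int y)"
      using arg_cong[OF choose2[of "x+y"], of int] by simp
    show "0 \<le> int x" "0 \<le> int y" by simp_all
  qed
  show ?thesis
  proof (rule ccontr)
    assume "\<not> ?thesis"
    then have l1: "card (MIM s2.F) < card (MIM E)" and l2: "card (MIM s1.F) < card (MIM E)" by auto
    have "x * card (MIM s1.F) < x * card (MIM E)" using l2 x1 by simp
    moreover have "y * card (MIM s2.F) \<le> y * card (MIM E)" using l1 by simp
    ultimately have "x * card (MIM s1.F) + y * card (MIM s2.F) < x * card (MIM E) + y * card (MIM E)"
      by (rule add_less_le_mono)
    then have "x * card (MIM s1.F) + y * card (MIM s2.F) < (x + y) * card (MIM E)"
      by (simp add: add_mult_distrib)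
    then show False using main by (simp add: of_nat_mult[symmetric] of_nat_add[symmetric] del: of_nat_mult of_nat_add)
  qed
qed

end
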